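(* Let $\mathbb{K}=\mathbb{F}_q(\!(X)\!)$ be the field of formal Laurent series over a finite field $\mathbb{F}_q$, and $\mathbb{O}=\mathbb{F}_q[\![X]\!]$. Define $f\colon\mathbb{O}\to\mathbb{K}$ by $f\big(\sum_{k=0}^\infty a_kX^k\big)=\sum_{k=0}^\infty a_kX^{[\frac32 k]}$ ($a_k\in\mathbb{F}_q$), where $[r]$ denotes the integer part of $r\ge0$. Then $f$ is $C^\infty_{Lud}$, but not $C^2_{BGN}$.
   Context: $\mathbb{K}$ carries the absolute value with $|x|=q^{-k}$ for $0\neq x=\sum_k a_kX^k$, where $k$ is minimal with $a_k\neq0$; then $\mathbb{O}$ is an open compact subring. For a topological vector space $E$ over a topological field $\mathbb{K}$, an open $U\subseteq E$ and $g\colon U\to F$: $U^{[1]}=\{(x,y,t)\in U\times E\times\mathbb{K}: x+ty\in U\}$, $U^{]1[}=\{(x,y,t)\in U^{[1]}:t\ne0\}$, $g^{]1[}(x,y,t)=(g(x+ty)-g(x))/t$. $g$ is $C^1_{BGN}$ if continuous and $g^{]1[}$ extends continuously to $g^{[1]}\colon U^{[1]}\to F$; $C^k_{BGN}$ ($k\ge2$) if $C^1_{BGN}$ and $g^{[1]}$ is $C^{k-1}_{BGN}$ (on the open set $U^{[1]}$). Ludkovsky's $C^k$: $\Phi_1(U):=U^{]1[}$, $\overline{\Phi}_1(U):=U^{[1]}$; for $k\ge2$, $\overline{\Phi}_k(U)$ is the set of $(x,\xi_1,\ldots,\xi_k,t_1,\ldots,t_k)\in U\times E^k\times\mathbb{K}^k$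 with both $(x,\xi_1,\ldots,\xi_{k-1},t_1,\ldots,t_{k-1})$ and $(x+t_k\xi_k,\xi_1,\ldots,\xi_{k-1},t_1,\ldots,t_{k-1})$ in $\overline{\Phi}_{k-1}(U)$, and $\Phi_k(U)$ its subset with $t_k\ne0$. $g$ is $C^1_{Lud}$ if it is $C^1_{BGN}$; then $\overline{\Phi}_1(g):=g^{[1]}$. For $k\ge2$, $g$ is $C^k_{Lud}$ if it is $C^{k-1}_{Lud}$ and the map $\Phi_k(g)\colon\Phi_k(U)\to F$, $(x,\xi_1,\ldots,\xi_k,t_1,\ldots,t_k)\mapsto t_k^{-1}\big(\overline{\Phi}_{k-1}(g)(x+t_k\xi_k,\xi_1,\ldots,\xi_{k-1},t_1,\ldots,t_{k-1})-\overline{\Phi}_{k-1}(g)(x,\xi_1,\ldots,\xi_{k-1},t_1,\ldots,t_{k-1})\big)$ has a continuous extension $\overline{\Phi}_k(g)\colon\overline{\Phi}_k(U)\to F$. $C^\infty_{Lud}$ means $C^k_{Lud}$ for all $k\in\mathbb{N}$. *)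

theory Defs
  imports "HOL-Computational_Algebra.Formal_Laurent_Series" "HOL-Library.Cardinality"
begin

text \<open>The field K = F_q((X)) is rendered as the type 'a fls with 'a a finite field
  (q = CARD('a)). Points of K^n are lists of length n. A point of
  E x E x K (E = K^n) is encoded as the list x @ y @ [t].\<close>

definition nv :: "'a::{field,finite} fls \<Rightarrow> real" where
  "nv x = (if x = 0 then 0 else real CARD('a) powr (- real_of_int (fls_subdegree x)))"

definition Oset :: "'a::{field,finite} fls set" where
  "Oset = {x. \<forall>n<0. fls_nth x n = 0}"

definition cont_at :: "'a::{field,finite} fls list set \<Rightarrow> ('a fls list \<Rightarrow> 'a fls) \<Rightarrow> 'a fls list \<Rightarrow> bool" where
  "cont_at S h p \<longleftrightarrow> (\<forall>e>0. \<exists>d>0. \<forall>y\<in>S.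
      (\<forall>i<length p. nv (y!i - p!i) < d) \<longrightarrow> nv (h y - h p) < e)"

definition contin_on :: "'a::{field,finite} fls list set \<Rightarrow> ('a fls list \<Rightarrow> 'a fls) \<Rightarrow> bool" where
  "contin_on S h \<longleftrightarrow> (\<forall>p\<in>S. cont_at S h p)"

definition has_cont_ext :: "'a::{field,finite} fls list set \<Rightarrow> 'a fls list set \<Rightarrow> ('a fls list \<Rightarrow> 'a fls) \<Rightarrow> bool" where
  "has_cont_ext A S h \<longleftrightarrow> (\<exists>H. contin_on S H \<and> (\<forall>p\<in>A. H p = h p))"

definition cont_ext :: "'a::{field,finite} fls list set \<Rightarrow> 'a fls list set \<Rightarrow> ('a fls list \<Rightarrow> 'a fls) \<Rightarrow> ('a fls list \<Rightarrow> 'a fls)" where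
  "cont_ext A S h = (SOME H. contin_on S H \<and> (\<forall>p\<in>A. H p = h p))"

definition vadd :: "'a::{field,finite} fls list \<Rightarrow> 'a fls list \<Rightarrow> 'a fls list" where
  "vadd x y = map2 (+) x y"

definition vsmul :: "'a::{field,finite} fls \<Rightarrow> 'a fls list \<Rightarrow> 'a fls list" where
  "vsmul t y = map ((*) t) y"

subsection \<open>Bertram--Gloeckner--Neeb differentiability\<close>

definition U1 :: "nat \<Rightarrow> 'a::{field,finite} fls list set \<Rightarrow> 'a fls list set" where
  "U1 n U = {x @ y @ [t] | x y t. x \<in> U \<and> length x = n \<and> length y = n \<and> vadd x (vsmul t y) \<in> U}"

definition U1o :: "nat \<Rightarrow> 'a::{field,finite} fls list set \<Rightarrow> 'a fls list set" where
  "U1o n U = {p \<in> U1 n U. p ! (2*n) \<noteq> 0}"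

definition diffq :: "nat \<Rightarrow> ('a::{field,finite} fls list \<Rightarrow> 'a fls) \<Rightarrow> 'a fls list \<Rightarrow> 'a fls" where
  "diffq n g p = (let x = take n p; y = take n (drop n p); t = p ! (2*n)
                  in (g (vadd x (vsmul t y)) - g x) / t)"

definition BGN1 :: "nat \<Rightarrow> 'a::{field,finite} fls list set \<Rightarrow> ('a fls list \<Rightarrow> 'a fls) \<Rightarrow> bool" where
  "BGN1 n U g \<longleftrightarrow> contin_on U g \<and> has_cont_ext (U1o n U) (U1 n U) (diffq n g)"

definition g1 :: "nat \<Rightarrow> 'a::{field,finite} fls list set \<Rightarrow> ('a fls list \<Rightarrow> 'a fls) \<Rightarrow> 'a fls list \<Rightarrow> 'a fls" where
  "g1 n U g = cont_ext (U1o n U) (U1 n U) (diffq n g)"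

fun BGN :: "nat \<Rightarrow> nat \<Rightarrow> 'a::{field,finite} fls list set \<Rightarrow> ('a fls list \<Rightarrow> 'a fls) \<Rightarrow> bool" where
  "BGN 0 n U g = contin_on U g"
| "BGN (Suc 0) n U g = BGN1 n U g"
| "BGN (Suc (Suc k)) n U g = (BGN1 n U g \<and> BGN (Suc k) (2*n+1) (U1 n U) (g1 n U g))"

subsection \<open>Ludkovsky differentiability (for E = F = K)\<close>

text \<open>A point (x, xi_1..xi_k, t_1..t_k) is encoded as the list x # [xi_1..xi_k] @ [t_1..t_k].
  LPhibar U 0 = U (as singleton lists), LPhibar U 1 = U^[1].\<close>
primrec LPhibar :: "'a::{field,finite} fls set \<Rightarrow> nat \<Rightarrow> 'a fls list set" where
  "LPhibar U 0 = {[x] | x. x \<in> U}"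
| "LPhibar U (Suc m) = {x # xs @ [xi] @ ts @ [t] | x xs xi ts t.
      length xs = m \<and> length ts = m \<and>
      x # xs @ ts \<in> LPhibar U m \<and> (x + t * xi) # xs @ ts \<in> LPhibar U m}"

definition LPhi :: "'a::{field,finite} fls set \<Rightarrow> nat \<Rightarrow> 'a fls list set" where
  "LPhi U k = {p \<in> LPhibar U k. last p \<noteq> 0}"

definition Lquot :: "nat \<Rightarrow> ('a::{field,finite} fls list \<Rightarrow> 'a fls) \<Rightarrow> 'a fls list \<Rightarrow> 'a fls" where
  "Lquot m G p = (let x = hd p; xs = take m (tl p); xi = p ! (m+1);
                      ts = take m (drop (m+2) p); t = last p
                  in (G ((x + t * xi) # xs @ ts) - G (x # xs @ ts)) / t)"

primrec LudBar :: "'a::{field,finite} fls set \<Rightarrow> ('a fls \<Rightarrow> 'a fls) \<Rightarrow> nat \<Rightarrow> 'a fls list \<Rightarrow> 'a fls" where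
  "LudBar U g 0 = (\<lambda>p. g (hd p))"
| "LudBar U g (Suc m) = cont_ext (LPhi U (Suc m)) (LPhibar U (Suc m)) (Lquot m (LudBar U g m))"

primrec Lud :: "'a::{field,finite} fls set \<Rightarrow> ('a fls \<Rightarrow> 'a fls) \<Rightarrow> nat \<Rightarrow> bool" where
  "Lud U g 0 = contin_on (LPhibar U 0) (\<lambda>p. g (hd p))"
| "Lud U g (Suc m) = (Lud U g m \<and>
      has_cont_ext (LPhi U (Suc m)) (LPhibar U (Suc m)) (Lquot m (LudBar U g m)))"

definition Lud_inf :: "'a::{field,finite} fls set \<Rightarrow> ('a fls \<Rightarrow> 'a fls) \<Rightarrow> bool" where
  "Lud_inf U g \<longleftrightarrow> (\<forall>k. Lud U g k)"

definition f32 :: "'a::{field,finite} fls \<Rightarrow> 'a fls" where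
  "f32 x = fps_to_fls (Abs_fps (\<lambda>m. if \<exists>k::nat. m = (3*k) div 2
                                       then fls_nth x (int (THE k::nat. m = (3*k) div 2)) else 0))"

end

theory Submission
  imports Defs
begin

unbundle fps_syntax



definition vge :: "'a::{field,finite} fls \<Rightarrow> int \<Rightarrow> bool" where
  "vge z N \<longleftrightarrow> (\<forall>n<N. z $$ n = 0)"

lemma vge_mono: "vge z N \<Longrightarrow> M \<le> N \<Longrightarrow> vge z M"
  by (auto simp: vge_def)

lemma vge_add: "vge a N \<Longrightarrow> vge b N \<Longrightarrow> vge (a + b) N"
  by (auto simp: vge_def)

lemma vge_diff: "vge a N \<Longrightarrow> vge b N \<Longrightarrow> vge (a - b) N"
  by (auto simp: vge_def)

lemma vge_0 [simp]: "vge 0 N"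
  by (auto simp: vge_def)

lemma vge_iff: "vge z N \<longleftrightarrow> z = 0 \<or> N \<le> fls_subdegree z"
  unfolding vge_def
  by (metis fls_eq0_below_subdegree fls_nonzeroI fls_subdegree_geI linorder_not_le order_less_le_trans)

lemma vge_mult: "vge a N \<Longrightarrow> vge b M \<Longrightarrow> vge (a * b) (N + M)"
  unfolding vge_iff by (cases "a = 0"; cases "b = 0") auto

lemma vge_subdeg: "vge t (fls_subdegree t)"
  unfolding vge_iff by auto

lemma vge_inverse: "vge (inverse t) (- fls_subdegree t)"
  unfolding vge_iff by auto

lemma vge_all: "(\<And>N. vge z N) \<Longrightarrow> z = 0"
  unfolding vge_def by (meson fls_zero_eqI less_add_one)

lemma Oset_vge: "x \<in> Oset \<longleftrightarrow> vge x 0"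
  by (simp add: Oset_def vge_def)

lemma card_ge2: "CARD('a::{field,finite}) \<ge> 2"
proof -
  have "card {0::'a, 1} \<le> CARD('a)" by (rule card_mono) auto
  then show ?thesis by simp
qed

lemma nv_le: "vge (z::'a::{field,finite} fls) N \<Longrightarrow> nv z \<le> real CARD('a) powr (- of_int N)"
proof -
  assume a: "vge z N"
  have q: "real CARD('a) \<ge> 2" using card_ge2[where 'a='a] by linarith
  show ?thesis
  proof (cases "z = 0")
    case True then show ?thesis by (simp add: nv_def)
  next
    case False
    then have "N \<le> fls_subdegree z" using a vge_iff by auto
    then show ?thesis using False q by (simp add: nv_def powr_mono)
  qed
qed

lemma nv_lt: "nv (z::'a::{field,finite} fls) < real CARD('a) powr (- of_int N) \<Longrightarrow> vge z (N+1)"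
proof -
  assume a: "nv z < real CARD('a) powr (- of_int N)"
  have q: "real CARD('a) > 1" using card_ge2[where 'a='a] by linarith
  show ?thesis
  proof (cases "z = 0")
    case True then show ?thesis by simp
  next
    case False
    then have "real CARD('a) powr (- of_int (fls_subdegree z)) < real CARD('a) powr (- of_int N)"
      using a by (simp add: nv_def)
    then have "- of_int (fls_subdegree z) < (- of_int N :: real)" using q
      by (simp add: powr_less_cancel_iff)
    then show ?thesis unfolding vge_iff by simp
  qed
qed

lemma small_powr: "d > 0 \<Longrightarrow> \<exists>M::int. real CARD('a::{field,finite}) powr (- of_int M) < d"
proof -
  assume d: "d > 0"
  have q: "real CARD('a) > 1" using card_ge2[where 'a='a] by linarith
  have "inverse (real CARD('a)) < 1" using q by (simp add: inverse_less_1_iff)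
  then obtain n where n: "inverse (real CARD('a)) ^ n < d" using real_arch_pow_inv d by blast
  have "real CARD('a) powr (- of_int (int n)) = inverse (real CARD('a)) ^ n"
    using q by (simp add: powr_minus powr_realpow power_inverse)
  then show ?thesis using n by metis
qed

lemma nv_pos: "real CARD('a::{field,finite}) powr x > 0"
  using card_ge2[where 'a='a] by simp

lemma cont_at_iff:
  "cont_at S h (p::'a::{field,finite} fls list) \<longleftrightarrow>
   (\<forall>N. \<exists>M. \<forall>y\<in>S. (\<forall>i<length p. vge (y!i - p!i) M) \<longrightarrow> vge (h y - h p) N)"
proof
  assume c: "cont_at S h p"
  show "\<forall>N. \<exists>M. \<forall>y\<in>S. (\<forall>i<length p. vge (y!i - p!i) M) \<longrightarrow> vge (h y - h p) N"
  proof
    fix N :: int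
    obtain d where d: "d > 0" "\<forall>y\<in>S. (\<forall>i<length p. nv (y!i - p!i) < d) \<longrightarrow>
        nv (h y - h p) < real CARD('a) powr (- of_int (N - 1))"
      using c nv_pos[where 'a='a] unfolding cont_at_def by meson
    obtain M :: int where M: "real CARD('a) powr (- of_int M) < d" using small_powr d(1) by blast
    show "\<exists>M. \<forall>y\<in>S. (\<forall>i<length p. vge (y!i - p!i) M) \<longrightarrow> vge (h y - h p) N"
    proof (intro exI ballI impI)
      fix y assume y: "y \<in> S" "\<forall>i<length p. vge (y!i - p!i) M"
      have "\<forall>i<length p. nv (y!i - p!i) < d" using y(2) nv_le M by (meson order_le_less_trans)
      then have "nv (h y - h p) < real CARD('a) powr (- of_int (N - 1))" using d y by blast
      then show "vge (h y - h p) N" using nv_lt by fastforce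
    qed
  qed
next
  assume c: "\<forall>N. \<exists>M. \<forall>y\<in>S. (\<forall>i<length p. vge (y!i - p!i) M) \<longrightarrow> vge (h y - h p) N"
  show "cont_at S h p" unfolding cont_at_def
  proof (intro allI impI)
    fix e :: real assume e: "e > 0"
    obtain N :: int where N: "real CARD('a) powr (- of_int N) < e" using small_powr e by blast
    obtain M where M: "\<forall>y\<in>S. (\<forall>i<length p. vge (y!i - p!i) M) \<longrightarrow> vge (h y - h p) N"
      using c by blast
    show "\<exists>d>0. \<forall>y\<in>S. (\<forall>i<length p. nv (y!i - p!i) < d) \<longrightarrow> nv (h y - h p) < e"
    proof (intro exI conjI ballI impI)
      show "real CARD('a) powr (- of_int (M - 1)) > 0" by (rule nv_pos)
      fix y assume y: "y \<in> S" "\<forall>i<length p. nv (y!i - p!i) < real CARD('a) powr (- of_int (M - 1))"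
      have "\<forall>i<length p. vge (y!i - p!i) M" using y(2) nv_lt by fastforce
      then have "vge (h y - h p) N" using M y(1) by blast
      then show "nv (h y - h p) < e" using nv_le N by (meson order_le_less_trans)
    qed
  qed
qed




lemma f32_nth_raw: "f32 x $$ m = (if m < 0 then 0 else if \<exists>k::nat. nat m = (3*k) div 2
      then x $$ int (THE k::nat. nat m = (3*k) div 2) else 0)"
  unfolding f32_def by simp

lemma three_half_mono: "k < (k'::nat) \<Longrightarrow> (3*k) div 2 < (3*k') div 2"
proof -
  assume "k < k'"
  then have "3*k + 2 \<le> 3*k'" by simp
  then have "(3*k + 2) div 2 \<le> (3*k') div 2" by (rule div_le_mono)
  moreover have "(3*k + 2) div 2 = (3*k) div 2 + 1" by simp
  ultimately show ?thesis by simp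
qed

lemma three_half_le: "k \<le> (k'::nat) \<Longrightarrow> (3*k) div 2 \<le> (3*k') div 2"
  by (simp add: div_le_mono)

lemma three_half_inj: "(3*k) div 2 = (3*k') div 2 \<Longrightarrow> k = (k'::nat)"
  by (metis less_irrefl linorder_neqE_nat three_half_mono)

lemma f32_nth_k: "f32 x $$ int ((3*k) div 2) = x $$ int k"
proof -
  have "(THE k'::nat. nat (int ((3*k) div 2)) = (3*k') div 2) = k"
    by (rule the_equality) (auto dest: three_half_inj)
  then show ?thesis by (auto simp: f32_nth_raw)
qed

lemma f32_nth_other: "(\<And>k::nat. m \<noteq> int ((3*k) div 2)) \<Longrightarrow> f32 x $$ m = 0"
proof -
  assume a: "\<And>k::nat. m \<noteq> int ((3*k) div 2)"
  have "\<not> (\<exists>k::nat. nat m = (3*k) div 2) \<or> m < 0"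
  proof (cases "m < 0")
    case False
    show ?thesis
    proof (rule disjI1, rule notI)
      assume "\<exists>k::nat. nat m = (3*k) div 2"
      then obtain k where "nat m = (3*k) div 2" by blast
      then have "m = int ((3*k) div 2)" using False by linarith
      then show False using a by blast
    qed
  qed simp
  then show ?thesis unfolding f32_nth_raw by auto
qed

lemma f32_nth_cases:
  obtains k where "m = int ((3*k) div 2)" "f32 x $$ m = x $$ int k"
  | "f32 x $$ m = 0"
proof (cases "\<exists>k::nat. m = int ((3*k) div 2)")
  case True
  then obtain k where "m = int ((3*k) div 2)" by blast
  then show ?thesis using that(1)[of k] f32_nth_k by blast
next
  case False
  then show ?thesis using that(2) f32_nth_other by blast
qed

lemma f32_nth: "f32 x $$ m = (if \<exists>k::nat. m = int ((3*k) div 2)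
      then x $$ int (THE k::nat. m = int ((3*k) div 2)) else 0)"
proof (cases "\<exists>k::nat. m = int ((3*k) div 2)")
  case True
  then obtain k where k: "m = int ((3*k) div 2)" by blast
  have "(THE k'::nat. m = int ((3*k') div 2)) = k"
    using k by (intro the_equality) (auto dest: three_half_inj)
  moreover have "f32 x $$ m = x $$ int k" using k f32_nth_k by simp
  ultimately show ?thesis using True by (simp only: if_True)
next
  case False
  then show ?thesis using f32_nth_other by metis
qed

lemma f32_add: "f32 (a + b) = f32 a + f32 b"
  by (rule fls_eqI) (simp only: f32_nth fls_plus_nth, simp)

lemma f32_diff: "f32 (a - b) = f32 a - f32 b"
  by (rule fls_eqI) (simp only: f32_nth fls_minus_nth, simp)

lemma f32_zero [simp]: "f32 0 = 0"
  using f32_diff[of 0 0] by simp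

lemma vge_f32_0: "vge (f32 x) 0"
  unfolding vge_def by (auto intro: f32_nth_other)

lemma vge_f32: "vge x N \<Longrightarrow> vge (f32 x) N"
  unfolding vge_def
proof (intro allI impI)
  fix n assume a: "\<forall>n<N. x $$ n = 0" and n: "n < N"
  show "f32 x $$ n = 0"
  proof (cases n x rule: f32_nth_cases)
    case (1 k)
    then have "int k < N" using n by linarith
    then show ?thesis using 1 a by simp
  qed
qed

lemma vge_f32_2: "vge x (int n) \<Longrightarrow> vge (f32 x) (int ((3*n) div 2))"
  unfolding vge_def
proof (intro allI impI)
  fix m assume a: "\<forall>m<int n. x $$ m = 0" and m: "m < int ((3*n) div 2)"
  show "f32 x $$ m = 0"
  proof (cases m x rule: f32_nth_cases)
    case (1 k)
    then have "(3*k) div 2 < (3*n) div 2" using m by linarith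
    then have "k < n" using three_half_le[of n k] by linarith
    then show ?thesis using 1 a by simp
  qed
qed

lemma f32_X: "f32 (fls_X ^ k :: 'a::{field,finite} fls) = fls_X ^ ((3*k) div 2)"
proof (rule fls_eqI)
  fix m show "f32 (fls_X ^ k :: 'a fls) $$ m = fls_X ^ ((3*k) div 2) $$ m"
  proof (cases m "fls_X ^ k :: 'a fls" rule: f32_nth_cases)
    case (1 k')
    then show ?thesis using three_half_inj[of k k'] by auto
  next
    case 2
    then show ?thesis by (auto simp: f32_nth_k)
  qed
qed




lemma vge_neg: "vge a N \<Longrightarrow> vge (- a) N"
  by (auto simp: vge_def)

lemma vge_lower: "\<exists>L\<le>0. vge (z::'a::{field,finite} fls) L"
proof (cases "z = 0")
  case True then show ?thesis by auto
next
  case False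
  then have "vge z (min 0 (fls_subdegree z))" unfolding vge_iff by simp
  then show ?thesis by (intro exI[of _ "min 0 (fls_subdegree z)"]) simp
qed

lemma subdeg_stable:
  assumes t: "t \<noteq> 0" and d: "vge (t' - t) (fls_subdegree t + 1)"
  shows "t' \<noteq> 0" "fls_subdegree t' = fls_subdegree t"
proof -
  have e: "\<And>n. n \<le> fls_subdegree t \<Longrightarrow> t' $$ n = t $$ n"
  proof -
    fix n assume "n \<le> fls_subdegree t"
    then have "(t' - t) $$ n = 0" using d unfolding vge_def by simp
    then show "t' $$ n = t $$ n" by simp
  qed
  have nz: "t' $$ fls_subdegree t \<noteq> 0" using e[of "fls_subdegree t"] t by simp
  then show "t' \<noteq> 0" by auto
  show "fls_subdegree t' = fls_subdegree t"
    by (rule fls_subdegree_eqI[OF nz]) (simp add: e)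
qed

definition h1 :: "'a::{field,finite} fls \<Rightarrow> 'a fls \<Rightarrow> 'a fls" where
  "h1 xi t = (if t = 0 then 0 else f32 (t * xi) / t)"

lemma h1_est_nz:
  fixes t xi :: "'a::{field,finite} fls"
  assumes t: "t \<noteq> 0"
  shows "\<exists>M. \<forall>xi' t'. vge (xi' - xi) M \<longrightarrow> vge (t' - t) M \<longrightarrow> vge (h1 xi' t' - h1 xi t) N"
proof -
  define j where "j = fls_subdegree t"
  obtain L where L: "L \<le> 0" "vge xi L" using vge_lower by blast
  define M where "M = \<bar>N\<bar> + 2*\<bar>j\<bar> + \<bar>L\<bar> + 1"
  have ab: "N \<le> \<bar>N\<bar>" "j \<le> \<bar>j\<bar>" "- j \<le> \<bar>j\<bar>" "- L \<le> \<bar>L\<bar>" by auto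
  have M1: "j + 1 \<le> M" "L \<le> M" "N \<le> M + min L j + - j" "N \<le> 0 + (M + (- j + - j))"
    using ab L(1) unfolding M_def by linarith+
  show ?thesis
  proof (intro exI allI impI)
    fix xi' t' :: "'a fls"
    assume a1: "vge (xi' - xi) M" and a2: "vge (t' - t) M"
    have "vge (t' - t) (fls_subdegree t + 1)" using a2 M1(1) unfolding j_def by (rule vge_mono)
    from subdeg_stable[OF t this] have t': "t' \<noteq> 0" "fls_subdegree t' = j" unfolding j_def by auto
    have xi': "vge xi' L"
    proof -
      have "vge (xi' - xi) L" using a1 M1(2) by (rule vge_mono)
      from vge_add[OF this L(2)] show ?thesis by simp
    qed
    have tj: "vge t j" using vge_subdeg j_def by simp
    have id: "h1 xi' t' - h1 xi t =
        f32 (t' * xi' - t * xi) * inverse t' + f32 (t * xi) * ((- (t' - t)) * (inverse t * inverse t'))"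
      using t t'(1) by (simp add: h1_def f32_diff field_simps)
    have d1: "vge (t' * xi' - t * xi) (M + min L j)"
    proof -
      have "t' * xi' - t * xi = (t' - t) * xi' + t * (xi' - xi)" by (simp add: algebra_simps)
      moreover have "vge ((t' - t) * xi') (M + min L j)"
        using vge_mult[OF a2 xi'] by (rule vge_mono) simp
      moreover have "vge (t * (xi' - xi)) (M + min L j)"
        using vge_mult[OF tj a1] by (rule vge_mono) simp
      ultimately show ?thesis by (simp add: vge_add)
    qed
    have A: "vge (f32 (t' * xi' - t * xi) * inverse t') (M + min L j + - j)"
      using vge_mult[OF vge_f32[OF d1] vge_inverse[of t']] t'(2) by simp
    have B: "vge (f32 (t * xi) * ((- (t' - t)) * (inverse t * inverse t'))) (0 + (M + (- j + - j)))"
      using vge_mult[OF vge_f32_0 vge_mult[OF vge_neg[OF a2] vge_mult[OF vge_inverse[of t] vge_inverse[of t']]]]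
        t'(2) j_def by simp
    have "vge (f32 (t' * xi' - t * xi) * inverse t') N"
      using A M1(3) by (rule vge_mono)
    moreover have "vge (f32 (t * xi) * ((- (t' - t)) * (inverse t * inverse t'))) N"
      using B M1(4) by (rule vge_mono)
    ultimately show "vge (h1 xi' t' - h1 xi t) N" unfolding id by (rule vge_add)
  qed
qed

lemma three_half_int: "2 * int ((3*n) div 2) \<ge> 3 * int n - 1"
proof -
  have "3*n = 2 * ((3*n) div 2) + (3*n) mod 2" by simp
  moreover have "(3*n) mod 2 \<le> 1" by simp
  ultimately have "3*n \<le> 2 * ((3*n) div 2) + 1" by linarith
  then show ?thesis by linarith
qed

lemma h1_est_z:
  fixes xi :: "'a::{field,finite} fls"
  shows "\<exists>M. \<forall>xi' t'. vge (xi' - xi) M \<longrightarrow> vge t' M \<longrightarrow> vge (h1 xi' t') N"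
proof -
  obtain L where L: "L \<le> 0" "vge xi L" using vge_lower by blast
  define M where "M = 2*\<bar>N\<bar> + 3*\<bar>L\<bar> + 2"
  have ab: "N \<le> \<bar>N\<bar>" "- L \<le> \<bar>L\<bar>" "0 \<le> \<bar>N\<bar>" by auto
  have M1: "L \<le> M" "M + L \<ge> 0" "M + 3 * L - 1 \<ge> 2 * N + 1"
    using ab L(1) unfolding M_def by linarith+
  show ?thesis
  proof (intro exI allI impI)
    fix xi' t' :: "'a fls"
    assume a1: "vge (xi' - xi) M" and a2: "vge t' M"
    show "vge (h1 xi' t') N"
    proof (cases "t' = 0")
      case True then show ?thesis by (simp add: h1_def)
    next
      case False
      define j where "j = fls_subdegree t'"
      have jM: "M \<le> j" using a2 False vge_iff j_def by auto
      have xi': "vge xi' L"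
      proof -
        have "vge (xi' - xi) L" using a1 M1(1) by (rule vge_mono)
        from vge_add[OF this L(2)] show ?thesis by simp
      qed
      have p: "vge (t' * xi') (j + L)" using vge_mult[OF vge_subdeg[of t'] xi'] j_def by simp
      define n where "n = nat (j + L)"
      have jL: "j + L \<ge> 0" using jM M1(2) by linarith
      then have "vge (t' * xi') (int n)" using p n_def by simp
      then have "vge (f32 (t' * xi')) (int ((3*n) div 2))" by (rule vge_f32_2)
      from vge_mult[OF this vge_inverse[of t']]
      have q: "vge (f32 (t' * xi') * inverse t') (int ((3*n) div 2) + - j)" using j_def by simp
      have "2 * int ((3*n) div 2) \<ge> 3 * int n - 1" by (rule three_half_int)
      then have "int ((3*n) div 2) + - j \<ge> N" using jL jM n_def M1(3) by linarith
      with q have "vge (f32 (t' * xi') * inverse t') N" by (rule vge_mono)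
      then show ?thesis using False by (simp add: h1_def divide_inverse)
    qed
  qed
qed




lemma LPhibar_Suc_iff: "p \<in> LPhibar U (Suc m) \<longleftrightarrow> (\<exists>x xs xi ts t. p = x # xs @ [xi] @ ts @ [t] \<and>
   length xs = m \<and> length ts = m \<and> x # xs @ ts \<in> LPhibar U m \<and> (x + t*xi) # xs @ ts \<in> LPhibar U m)"
  by simp

lemma Oset_add: "a \<in> Oset \<Longrightarrow> b \<in> Oset \<Longrightarrow> a + b \<in> Oset"
  unfolding Oset_vge by (rule vge_add)

lemma LPhibar_shift: "p \<in> LPhibar Oset m \<Longrightarrow> h \<in> Oset \<Longrightarrow> (hd p + h) # tl p \<in> LPhibar Oset m"
proof (induction m arbitrary: p)
  case 0
  then show ?case by (auto intro: Oset_add)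
next
  case (Suc m)
  from Suc.prems(1) obtain x xs xi ts t where p: "p = x # xs @ [xi] @ ts @ [t]"
    "length xs = m" "length ts = m" "x # xs @ ts \<in> LPhibar Oset m" "(x + t*xi) # xs @ ts \<in> LPhibar Oset m"
    unfolding LPhibar_Suc_iff by blast
  have 1: "(x + h) # xs @ ts \<in> LPhibar Oset m" using Suc.IH[OF p(4) Suc.prems(2)] by simp
  have "(x + t*xi + h) # xs @ ts \<in> LPhibar Oset m" using Suc.IH[OF p(5) Suc.prems(2)] by simp
  then have 2: "(x + h + t*xi) # xs @ ts \<in> LPhibar Oset m" by (simp add: ac_simps)
  show ?case unfolding LPhibar_Suc_iff
    by (rule exI[of _ "x + h"], rule exI[of _ xs], rule exI[of _ xi], rule exI[of _ ts], rule exI[of _ t])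
       (simp add: p 1 2)
qed

lemma Lquot_eq: "length xs = m \<Longrightarrow> length ts = m \<Longrightarrow>
  Lquot m G (x # xs @ [xi] @ ts @ [t]) = (G ((x + t*xi) # xs @ ts) - G (x # xs @ ts)) / t"
  unfolding Lquot_def Let_def by (simp add: nth_append)

lemma vge_X_power: "int k \<ge> M \<Longrightarrow> vge (fls_X ^ k :: 'a::{field,finite} fls) M"
  unfolding vge_def by auto

lemma vge_X_power_times: "vge xi L \<Longrightarrow> - L \<le> int k \<Longrightarrow> vge (fls_X ^ k * xi :: 'a::{field,finite} fls) 0"
  unfolding vge_def by (simp add: fls_X_power_times_conv_shift)

lemma close_last: "vge a M \<Longrightarrow> \<forall>i<length (P @ [0]). vge ((P @ [a]) ! i - (P @ [0]) ! i) M"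
proof (intro allI impI)
  fix i assume a: "vge a M" and i: "i < length (P @ [0])"
  show "vge ((P @ [a]) ! i - (P @ [0]) ! i) M"
  proof (cases "i < length P")
    case True then show ?thesis by (simp add: nth_append)
  next
    case False
    then have "i = length P" using i by simp
    then show ?thesis using a by simp
  qed
qed

lemma uniq:
  assumes H: "contin_on (LPhibar Oset (Suc m)) H" and G: "contin_on (LPhibar Oset (Suc m)) G"
    and eq: "\<forall>q\<in>LPhi Oset (Suc m). H q = G q" and p: "p \<in> LPhibar Oset (Suc m)"
  shows "H p = G p"
proof (cases "last p = 0")
  case False
  then show ?thesis using eq p by (simp add: LPhi_def)
next
  case True
  from p obtain x xs xi ts t where pp: "p = x # xs @ [xi] @ ts @ [t]"
    "length xs = m" "length ts = m" "x # xs @ ts \<in> LPhibar Oset m" "(x + t*xi) # xs @ ts \<in> LPhibar Oset m"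
    unfolding LPhibar_Suc_iff by blast
  have t0: "t = 0" using True pp(1) by simp
  define P where "P = x # xs @ [xi] @ ts"
  have pP: "p = P @ [0]" using pp(1) t0 P_def by simp
  obtain L where L: "L \<le> 0" "vge xi L" using vge_lower by blast
  define K0 where "K0 = nat (- L)"
  have mem: "P @ [fls_X ^ k] \<in> LPhi Oset (Suc m)" if k: "k \<ge> K0" for k
  proof -
    have h: "fls_X ^ k * xi \<in> Oset" unfolding Oset_vge
      by (rule vge_X_power_times[OF L(2)]) (use k K0_def in linarith)
    have "(hd (x # xs @ ts) + fls_X ^ k * xi) # tl (x # xs @ ts) \<in> LPhibar Oset m"
      by (rule LPhibar_shift[OF pp(4) h])
    then have "(x + fls_X ^ k * xi) # xs @ ts \<in> LPhibar Oset m" by simp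
    then have "P @ [fls_X ^ k] \<in> LPhibar Oset (Suc m)" unfolding LPhibar_Suc_iff P_def
      using pp(2,3,4) by fastforce
    then show ?thesis unfolding LPhi_def by simp
  qed
  have "vge (H p - G p) N" for N
  proof -
    obtain M1 where M1: "\<forall>y\<in>LPhibar Oset (Suc m). (\<forall>i<length p. vge (y!i - p!i) M1) \<longrightarrow> vge (H y - H p) N"
      using H p unfolding contin_on_def cont_at_iff by blast
    obtain M2 where M2: "\<forall>y\<in>LPhibar Oset (Suc m). (\<forall>i<length p. vge (y!i - p!i) M2) \<longrightarrow> vge (G y - G p) N"
      using G p unfolding contin_on_def cont_at_iff by blast
    define k where "k = nat (max M1 M2) + K0"
    have k0: "k \<ge> K0" using k_def by simp
    have yL: "P @ [fls_X ^ k] \<in> LPhi Oset (Suc m)" by (rule mem[OF k0])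
    then have y: "P @ [fls_X ^ k] \<in> LPhibar Oset (Suc m)" unfolding LPhi_def by simp
    have c1: "\<forall>i<length p. vge ((P @ [fls_X ^ k])!i - p!i) M1"
      unfolding pP by (rule close_last, rule vge_X_power) (simp add: k_def, linarith)
    have c2: "\<forall>i<length p. vge ((P @ [fls_X ^ k])!i - p!i) M2"
      unfolding pP by (rule close_last, rule vge_X_power) (simp add: k_def, linarith)
    have a: "vge (H (P @ [fls_X ^ k]) - H p) N" using M1 y c1 by blast
    have b: "vge (G (P @ [fls_X ^ k]) - G p) N" using M2 y c2 by blast
    have e: "H (P @ [fls_X ^ k]) = G (P @ [fls_X ^ k])" using eq yL by blast
    have "H p - G p = (G (P @ [fls_X ^ k]) - G p) - (H (P @ [fls_X ^ k]) - H p)" using e by simp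
    then show ?thesis using vge_diff[OF b a] by simp
  qed
  then have "H p - G p = 0" by (rule vge_all)
  then show ?thesis by simp
qed



declare LPhibar.simps [simp del]

lemma Lquot_eq': "length xs = m \<Longrightarrow> length ts = m \<Longrightarrow>
  Lquot m G (x # xs @ xi # ts @ [t]) = (G ((x + t*xi) # xs @ ts) - G (x # xs @ ts)) / t"
  using Lquot_eq[of xs m ts G x xi t] by simp

definition H1 :: "'a::{field,finite} fls list \<Rightarrow> 'a fls" where
  "H1 p = h1 (p!1) (p!2)"

lemma LPhibar1_iff: "p \<in> LPhibar U (Suc 0) \<longleftrightarrow> (\<exists>x xi t. p = [x, xi, t] \<and> x \<in> U \<and> x + t*xi \<in> U)"
  unfolding LPhibar_Suc_iff by (auto simp: LPhibar.simps)

lemma H1_cont: "contin_on (LPhibar Oset (Suc 0)) (H1 :: 'a::{field,finite} fls list \<Rightarrow> 'a fls)"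
  unfolding contin_on_def cont_at_iff
proof (intro ballI allI)
  fix p :: "'a fls list" and N
  assume "p \<in> LPhibar Oset (Suc 0)"
  then obtain x xi t where p: "p = [x, xi, t]" unfolding LPhibar1_iff by blast
  show "\<exists>M. \<forall>y\<in>LPhibar Oset (Suc 0). (\<forall>i<length p. vge (y!i - p!i) M) \<longrightarrow> vge (H1 y - H1 p) N"
  proof (cases "t = 0")
    case True
    obtain M where M: "\<forall>xi' t'. vge (xi' - xi) M \<longrightarrow> vge t' M \<longrightarrow> vge (h1 xi' t') N"
      using h1_est_z by blast
    show ?thesis
    proof (intro exI ballI impI)
      fix y assume y: "y \<in> LPhibar Oset (Suc 0)" and c: "\<forall>i<length p. vge (y!i - p!i) M"
      from y obtain x' xi' t' where y': "y = [x', xi', t']" unfolding LPhibar1_iff by blast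
      have "vge (xi' - xi) M" using c[rule_format, of 1] p y' by simp
      moreover have "vge t' M" using c[rule_format, of 2] p y' True by simp
      ultimately have "vge (h1 xi' t') N" using M by blast
      then show "vge (H1 y - H1 p) N" using p y' True by (simp add: H1_def h1_def)
    qed
  next
    case False
    obtain M where M: "\<forall>xi' t'. vge (xi' - xi) M \<longrightarrow> vge (t' - t) M \<longrightarrow> vge (h1 xi' t' - h1 xi t) N"
      using h1_est_nz[OF False] by blast
    show ?thesis
    proof (intro exI ballI impI)
      fix y assume y: "y \<in> LPhibar Oset (Suc 0)" and c: "\<forall>i<length p. vge (y!i - p!i) M"
      from y obtain x' xi' t' where y': "y = [x', xi', t']" unfolding LPhibar1_iff by blast
      have "vge (xi' - xi) M" using c[rule_format, of 1] p y' by simp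
      moreover have "vge (t' - t) M" using c[rule_format, of 2] p y' by simp
      ultimately have "vge (h1 xi' t' - h1 xi t) N" using M by blast
      then show "vge (H1 y - H1 p) N" using p y' by (simp add: H1_def)
    qed
  qed
qed

lemma zero_cont: "contin_on S (\<lambda>p. 0 :: 'a::{field,finite} fls)"
  unfolding contin_on_def cont_at_iff by simp

definition Gm :: "nat \<Rightarrow> 'a::{field,finite} fls list \<Rightarrow> 'a fls" where
  "Gm m = (if m = 0 then (\<lambda>p. f32 (hd p)) else if m = 1 then H1 else (\<lambda>p. 0))"

lemma Gm_cont: "contin_on (LPhibar Oset (Suc m)) (Gm (Suc m) :: 'a::{field,finite} fls list \<Rightarrow> 'a fls)"
  by (cases m) (simp_all add: Gm_def H1_cont zero_cont)

lemma Gm_quot: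
  assumes p: "p \<in> LPhi Oset (Suc m)"
  shows "Lquot m (Gm m) p = (Gm (Suc m) p :: 'a::{field,finite} fls)"
proof -
  from p obtain x xs xi ts t where pp: "p = x # xs @ [xi] @ ts @ [t]"
    "length xs = m" "length ts = m"
    unfolding LPhi_def LPhibar_Suc_iff by blast
  have q: "Lquot m (Gm m) p = (Gm m ((x + t*xi) # xs @ ts) - Gm m (x # xs @ ts)) / t"
    using pp by (simp add: Lquot_eq')
  show ?thesis
  proof (cases m)
    case 0
    then have "xs = []" "ts = []" using pp by auto
    then show ?thesis using q pp 0 by (simp add: Gm_def H1_def h1_def f32_add)
  next
    case (Suc m')
    show ?thesis
    proof (cases m')
      case 0
      then obtain a b where "xs = [a]" "ts = [b]" using pp Suc by (auto simp: length_Suc_conv)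
      then show ?thesis using q Suc 0 by (simp add: Gm_def H1_def)
    next
      case (Suc m'')
      then show ?thesis using q \<open>m = Suc m'\<close> by (simp add: Gm_def)
    qed
  qed
qed

lemma f32_hd_cont: "contin_on (LPhibar Oset 0) (\<lambda>p. f32 (hd p) :: 'a::{field,finite} fls)"
  unfolding contin_on_def cont_at_iff
proof (intro ballI allI)
  fix p :: "'a fls list" and N
  assume "p \<in> LPhibar Oset 0"
  then obtain x where p: "p = [x]" by (auto simp: LPhibar.simps)
  show "\<exists>M. \<forall>y\<in>LPhibar Oset 0. (\<forall>i<length p. vge (y!i - p!i) M) \<longrightarrow> vge (f32 (hd y) - f32 (hd p)) N"
  proof (intro exI ballI impI)
    fix y assume y: "y \<in> LPhibar Oset 0" and c: "\<forall>i<length p. vge (y!i - p!i) N"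
    from y obtain x' where y': "y = [x']" by (auto simp: LPhibar.simps)
    have "vge (x' - x) N" using c p y' by simp
    then have "vge (f32 (x' - x)) N" by (rule vge_f32)
    then show "vge (f32 (hd y) - f32 (hd p)) N" using p y' by (simp add: f32_diff)
  qed
qed

lemma main_ind: "(\<forall>p\<in>LPhibar Oset m. LudBar Oset f32 m p = (Gm m p :: 'a::{field,finite} fls)) \<and> Lud (Oset :: 'a fls set) f32 m"
proof (induction m)
  case 0
  show ?case by (simp add: Gm_def f32_hd_cont)
next
  case (Suc m)
  have IH: "\<forall>p\<in>LPhibar Oset m. LudBar Oset f32 m p = (Gm m p :: 'a fls)" "Lud (Oset :: 'a fls set) f32 m"
    using Suc.IH by auto
  have a: "\<forall>p\<in>LPhi Oset (Suc m). Lquot m (LudBar Oset f32 m) p = (Gm (Suc m) p :: 'a fls)"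
  proof
    fix p :: "'a fls list" assume p: "p \<in> LPhi Oset (Suc m)"
    from p obtain x xs xi ts t where pp: "p = x # xs @ [xi] @ ts @ [t]"
      "length xs = m" "length ts = m" "x # xs @ ts \<in> LPhibar Oset m" "(x + t*xi) # xs @ ts \<in> LPhibar Oset m"
      unfolding LPhi_def LPhibar_Suc_iff by blast
    have "Lquot m (LudBar Oset f32 m) p = Lquot m (Gm m) p"
      using pp IH(1) by (simp add: Lquot_eq')
    then show "Lquot m (LudBar Oset f32 m) p = Gm (Suc m) p" using Gm_quot[OF p] by simp
  qed
  have b: "has_cont_ext (LPhi Oset (Suc m)) (LPhibar Oset (Suc m)) (Lquot m (LudBar Oset (f32 :: 'a fls \<Rightarrow> 'a fls) m))"
    unfolding has_cont_ext_def using Gm_cont a by metis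
  have c: "contin_on (LPhibar Oset (Suc m)) (LudBar Oset (f32 :: 'a fls \<Rightarrow> 'a fls) (Suc m)) \<and>
      (\<forall>p\<in>LPhi Oset (Suc m). LudBar Oset f32 (Suc m) p = (Lquot m (LudBar Oset f32 m) p :: 'a fls))"
    unfolding LudBar.simps cont_ext_def by (rule someI_ex[OF b[unfolded has_cont_ext_def]])
  have "\<forall>p\<in>LPhibar Oset (Suc m). LudBar Oset f32 (Suc m) p = (Gm (Suc m) p :: 'a fls)"
  proof
    fix p :: "'a fls list" assume p: "p \<in> LPhibar Oset (Suc m)"
    show "LudBar Oset f32 (Suc m) p = Gm (Suc m) p"
      by (rule uniq[OF conjunct1[OF c] Gm_cont _ p]) (use c a in auto)
  qed
  then show ?case using IH(2) b by simp
qed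

lemma part_lud: "Lud_inf (Oset :: 'a::{field,finite} fls set) f32"
  unfolding Lud_inf_def using main_ind by blast




lemma part_bgn: "\<not> BGN 2 1 {[x] | x. x \<in> (Oset :: 'a::{field,finite} fls set)} (\<lambda>p. f32 (hd p))"
proof
  define U where "U = {[x] | x. x \<in> (Oset :: 'a fls set)}"
  define g where "g = (\<lambda>p::'a fls list. f32 (hd p))"
  assume "BGN 2 1 {[x] | x. x \<in> (Oset :: 'a fls set)} (\<lambda>p. f32 (hd p))"
  then have A: "BGN 2 1 U g" unfolding U_def g_def .
  then have B1: "BGN1 1 U g" and B3: "BGN1 3 (U1 1 U) (g1 1 U g)"
    by (simp_all add: numeral_2_eq_2 numeral_3_eq_3)
  define G1 where "G1 = g1 1 U g"
  have hc: "has_cont_ext (U1o 1 U) (U1 1 U) (diffq 1 g)" using B1 unfolding BGN1_def by simp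
  have G1c: "contin_on (U1 1 U) G1 \<and> (\<forall>p\<in>U1o 1 U. G1 p = diffq 1 g p)"
    unfolding G1_def g1_def cont_ext_def by (rule someI_ex[OF hc[unfolded has_cont_ext_def]])
  obtain H where Hc: "contin_on (U1 3 (U1 1 U)) H" and He: "\<forall>p\<in>U1o 3 (U1 1 U). H p = diffq 3 G1 p"
    using B3 unfolding BGN1_def has_cont_ext_def G1_def by blast
  have O0: "(0::'a fls) \<in> Oset" by (simp add: Oset_vge)
  have m1: "[0, 1, s] \<in> U1 1 U" if s: "s \<in> Oset" for s :: "'a fls"
    unfolding U1_def U_def
    by (rule CollectI, rule exI[of _ "[0]"], rule exI[of _ "[1]"], rule exI[of _ s])
       (simp add: vadd_def vsmul_def s O0)
  have m1o: "[0, 1, s] \<in> U1o 1 U" if s: "s \<in> Oset" "s \<noteq> 0" for s :: "'a fls"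
    unfolding U1o_def using m1[OF s(1)] s(2) by simp
  have m3: "[0, 1, 0, 0, 0, 1, s] \<in> U1 3 (U1 1 U)" if s: "s \<in> Oset" for s :: "'a fls"
    unfolding U1_def[of 3 "U1 1 U"]
    by (rule CollectI, rule exI[of _ "[0,1,0]"], rule exI[of _ "[0,0,1]"], rule exI[of _ s])
       (use m1[OF s] m1[OF O0] in \<open>simp add: vadd_def vsmul_def\<close>)
  have m3o: "[0, 1, 0, 0, 0, 1, s] \<in> U1o 3 (U1 1 U)" if s: "s \<in> Oset" "s \<noteq> 0" for s :: "'a fls"
    unfolding U1o_def using m3[OF s(1)] s(2) by simp
  have v1: "diffq 1 g [0, 1, s] = f32 s / s" for s :: "'a fls"
    unfolding diffq_def g_def vadd_def vsmul_def by simp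
  have v2: "diffq 3 G1 [0, 1, 0, 0, 0, 1, s] = (G1 [0, 1, s] - G1 [0, 1, 0]) / s" for s :: "'a fls"
    unfolding diffq_def vadd_def vsmul_def by (simp add: numeral_3_eq_3)
  have XO: "(fls_X ^ k :: 'a fls) \<in> Oset" for k unfolding Oset_vge by (rule vge_X_power) simp
  have Xnz: "(fls_X ^ k :: 'a fls) \<noteq> 0" for k by simp
  have val1: "G1 [0, 1, fls_X ^ (2*a)] = fls_shift (int (2*a)) (fls_X ^ (3*a) :: 'a fls)" for a
  proof -
    have "G1 [0, 1, fls_X ^ (2*a)] = diffq 1 g [0, 1, fls_X ^ (2*a)]"
      using G1c m1o[OF XO Xnz] by blast
    also have "\<dots> = f32 (fls_X ^ (2*a)) / fls_X ^ (2*a)" by (rule v1)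
    also have "f32 (fls_X ^ (2*a) :: 'a fls) = fls_X ^ (3*a)" using f32_X[of "2*a"] by simp
    finally show ?thesis by simp
  qed
  have c0: "G1 [0, 1, 0] = 0"
  proof (rule vge_all)
    fix N
    obtain M where M: "\<forall>y\<in>U1 1 U. (\<forall>i<length [0, 1, 0::'a fls]. vge (y!i - [0, 1, 0]!i) M) \<longrightarrow>
        vge (G1 y - G1 [0, 1, 0]) N"
      using G1c m1[OF O0] unfolding contin_on_def cont_at_iff by blast
    define a where "a = nat (max M N) + 1"
    have "\<forall>i<length ([0, 1] @ [0::'a fls]). vge (([0, 1] @ [fls_X ^ (2*a) :: 'a fls]) ! i - ([0, 1] @ [0]) ! i) M"
      apply (rule close_last)
      apply (rule vge_X_power)
      by (simp add: a_def, linarith)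
    then have "vge (G1 [0, 1, fls_X ^ (2*a)] - G1 [0, 1, 0]) N" using M m1[OF XO] by simp
    moreover have "vge (G1 [0, 1, fls_X ^ (2*a)]) N"
      unfolding val1 vge_def by (simp add: a_def, linarith)
    ultimately have "vge (G1 [0, 1, fls_X ^ (2*a)] - (G1 [0, 1, fls_X ^ (2*a)] - G1 [0, 1, 0])) N"
      by (rule vge_diff[rotated])
    then show "vge (G1 [0, 1, 0]) N" by simp
  qed
  have val3: "H [0, 1, 0, 0, 0, 1, fls_X ^ (2*a)] $$ n = (if n = - int a then 1 else 0)" for a n
  proof -
    have "H [0, 1, 0, 0, 0, 1, fls_X ^ (2*a)] = diffq 3 G1 [0, 1, 0, 0, 0, 1, fls_X ^ (2*a)]"
      using He m3o[OF XO Xnz] by blast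
    also have "\<dots> = fls_shift (int (2*a)) (fls_shift (int (2*a)) (fls_X ^ (3*a) :: 'a fls))"
      unfolding v2 val1 c0 by simp
    finally show ?thesis by auto
  qed
  obtain M where M: "\<forall>y\<in>U1 3 (U1 1 U). (\<forall>i<length [0, 1, 0, 0, 0, 1, 0::'a fls].
        vge (y!i - [0, 1, 0, 0, 0, 1, 0]!i) M) \<longrightarrow> vge (H y - H [0, 1, 0, 0, 0, 1, 0]) 0"
    using Hc m3[OF O0] unfolding contin_on_def cont_at_iff by blast
  have cl: "vge (H [0, 1, 0, 0, 0, 1, fls_X ^ (2*a)] - H [0, 1, 0, 0, 0, 1, 0]) 0" if a: "int (2*a) \<ge> M" for a
  proof -
    have "\<forall>i<length ([0, 1, 0, 0, 0, 1] @ [0::'a fls]).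
        vge (([0, 1, 0, 0, 0, 1] @ [fls_X ^ (2*a) :: 'a fls]) ! i - ([0, 1, 0, 0, 0, 1] @ [0]) ! i) M"
      by (rule close_last, rule vge_X_power[OF a])
    then show ?thesis using M m3[OF XO] by simp
  qed
  define a1 where "a1 = nat M + 1"
  have a1b: "M \<le> int (2*a1)" "M \<le> int (2*(a1+1))" unfolding a1_def by auto
  have "vge (H [0, 1, 0, 0, 0, 1, fls_X ^ (2*a1)] - H [0, 1, 0, 0, 0, 1, 0]) 0"
    by (rule cl) (rule a1b)
  moreover have "vge (H [0, 1, 0, 0, 0, 1, fls_X ^ (2*(a1+1))] - H [0, 1, 0, 0, 0, 1, 0]) 0"
    by (rule cl) (rule a1b)
  ultimately have "vge (H [0, 1, 0, 0, 0, 1, fls_X ^ (2*a1)] - H [0, 1, 0, 0, 0, 1, fls_X ^ (2*(a1+1))]) 0"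
    using vge_diff by fastforce
  then have "(H [0, 1, 0, 0, 0, 1, fls_X ^ (2*a1)] - H [0, 1, 0, 0, 0, 1, fls_X ^ (2*(a1+1))]) $$ (- int a1) = 0"
    unfolding vge_def by (simp add: a1_def)
  then show False unfolding fls_minus_nth val3 by simp
qed



theorem theorem3p7:
  shows "Lud_inf (Oset :: 'a::{field,finite} fls set) f32 \<and>
         \<not> BGN 2 1 {[x] | x. x \<in> (Oset :: 'a fls set)} (\<lambda>p. f32 (hd p))"
  using part_lud part_bgn by blast

end
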